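(* If there is a derivation in system $\mathcal L$ of $\Gamma\vdash M$, then there is a derivation in $\mathcal L$ of the same sequent whose length is at most $|St(\Gamma\cup\{M\})|$ (the cardinality of $St(\Gamma\cup\{M\})$).
   Context: Fix names, variables and constructors $\mathsf{pub}$ (unary), $\mathsf{sign},\mathsf{blind},\langle\cdot,\cdot\rangle,\{\cdot\}_\cdot$ (binary). $E$ is an equational theory with signature $\Sigma_E$ disjoint from the constructors, with at most one associative-commutative (AC) binary symbol $\oplus$, presented by a rewrite system $R_E$ terminating and confluent modulo AC. Terms are ground terms over names, the constructors and $\Sigma_E$. $\equiv$ is equality modulo AC, $\approx_E$ equality modulo $E$. Guarded term: a name, a variable, or headed by a constructor. $E$-context: term with holes built only from symbols of $\Sigma_E$. Sequents $\Gamma\vdash M$ have all terms in normal form; $\Gamma,M$ means $\Gamma\cup\{M\}$. $\Gamma\Vdash_{\mathcal R}M$ means $\Gamma\vdash M$ is derivable using only: (id) $\Gamma\vdash M$ if $M\approx_E C[M_1,\dots,M_k]$ for an $E$-context $C$ and $M_i\in\Gamma$; and the right rules: from $\Gamma\vdash M$ and $\Gamma\vdash N$ infer $\Gamma\vdash\langle M,N\rangle$; from $\Gamma\vdash M$ and $\Gamma\vdash K$ infer $\Gamma\vdash\{M\}_K$, resp. $\Gamma\vdash\mathsf{sign}(M,K)$, resp. $\Gamma\vdash\mathsf{blind}(M,K)$. System $\mathcal L$ (all rules except $r$ have a single premise, so derivations are linear sequences of sequents): ($r$) $\Gamma\vdash M$ with no premise if $\Gamma\Vdash_{\mathcal R}M$;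 ($lp$) from $\Gamma,\langle M,N\rangle,M,N\vdash T$ infer $\Gamma,\langle M,N\rangle\vdash T$; ($le$) from $\Gamma,\{M\}_K,M,K\vdash N$ infer $\Gamma,\{M\}_K\vdash N$ if $\Gamma,\{M\}_K\Vdash_{\mathcal R}K$; ($\mathsf{sign}$) from $\Gamma,\mathsf{sign}(M,K),\mathsf{pub}(L),M\vdash N$ infer $\Gamma,\mathsf{sign}(M,K),\mathsf{pub}(L)\vdash N$ if $K\equiv L$; ($\mathsf{blind}_1$) from $\Gamma,\mathsf{blind}(M,K),M,K\vdash N$ infer $\Gamma,\mathsf{blind}(M,K)\vdash N$ if $\Gamma,\mathsf{blind}(M,K)\Vdash_{\mathcal R}K$; ($\mathsf{blind}_2$) from $\Gamma,\mathsf{sign}(\mathsf{blind}(M,R),K),\mathsf{sign}(M,K),R\vdash N$ infer $\Gamma,\mathsf{sign}(\mathsf{blind}(M,R),K)\vdash N$ if $\Gamma,\mathsf{sign}(\mathsf{blind}(M,R),K)\Vdash_{\mathcal R}R$; ($ls$) from $\Gamma,A\vdash M$ infer $\Gamma\vdash M$ if $A$ is a guarded subterm of a term in $\Gamma\cup\{M\}$ and $\Gamma\Vdash_{\mathcal R}A$. The length of a derivation is the number of rule applications on its (single) branch. For a set of terms $\Delta$: $pst(\Delta)$ is the set of proper subterms of terms in $\Delta$; $sst(\Delta)=\{\mathsf{sign}(M,N)\mid M,N\in pst(\Delta)\}$; $St(\Delta)=\Delta\cup pst(\Delta)\cup sst(\Delta)$. *)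

theory Defs
  imports Main
begin

text \<open>Terms over names 'n, E-symbols 'f (signature Sigma_E) and variables 'v.\<close>

datatype ('n, 'f, 'v) trm =
    Var 'v
  | Nm 'n
  | Pub "('n, 'f, 'v) trm"
  | Sign "('n, 'f, 'v) trm" "('n, 'f, 'v) trm"
  | Blind "('n, 'f, 'v) trm" "('n, 'f, 'v) trm"
  | Pair "('n, 'f, 'v) trm" "('n, 'f, 'v) trm"
  | Enc "('n, 'f, 'v) trm" "('n, 'f, 'v) trm"   \<comment> \<open>Enc M K = {M}_K\<close>
  | Fn 'f "('n, 'f, 'v) trm list"

fun vars :: "('n, 'f, 'v) trm \<Rightarrow> 'v set" where
  "vars (Var x) = {x}"
| "vars (Nm a) = {}"
| "vars (Pub t) = vars t"
| "vars (Sign s t) = vars s \<union> vars t"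
| "vars (Blind s t) = vars s \<union> vars t"
| "vars (Pair s t) = vars s \<union> vars t"
| "vars (Enc s t) = vars s \<union> vars t"
| "vars (Fn f ts) = (\<Union>t\<in>set ts. vars t)"

definition ground :: "('n, 'f, 'v) trm \<Rightarrow> bool" where
  "ground t \<longleftrightarrow> vars t = {}"

fun wf_trm :: "('f \<Rightarrow> nat) \<Rightarrow> ('n, 'f, 'v) trm \<Rightarrow> bool" where
  "wf_trm ar (Var x) = True"
| "wf_trm ar (Nm a) = True"
| "wf_trm ar (Pub t) = wf_trm ar t"
| "wf_trm ar (Sign s t) = (wf_trm ar s \<and> wf_trm ar t)"
| "wf_trm ar (Blind s t) = (wf_trm ar s \<and> wf_trm ar t)"
| "wf_trm ar (Pair s t) = (wf_trm ar s \<and> wf_trm ar t)"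
| "wf_trm ar (Enc s t) = (wf_trm ar s \<and> wf_trm ar t)"
| "wf_trm ar (Fn f ts) = (length ts = ar f \<and> (\<forall>t\<in>set ts. wf_trm ar t))"

fun eterm :: "('n, 'f, 'v) trm \<Rightarrow> bool" where
  "eterm (Var x) = True"
| "eterm (Fn f ts) = (\<forall>t\<in>set ts. eterm t)"
| "eterm _ = False"

fun subst :: "('v \<Rightarrow> ('n, 'f, 'v) trm) \<Rightarrow> ('n, 'f, 'v) trm \<Rightarrow> ('n, 'f, 'v) trm" where
  "subst \<sigma> (Var x) = \<sigma> x"
| "subst \<sigma> (Nm a) = Nm a"
| "subst \<sigma> (Pub t) = Pub (subst \<sigma> t)"
| "subst \<sigma> (Sign s t) = Sign (subst \<sigma> s) (subst \<sigma> t)"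
| "subst \<sigma> (Blind s t) = Blind (subst \<sigma> s) (subst \<sigma> t)"
| "subst \<sigma> (Pair s t) = Pair (subst \<sigma> s) (subst \<sigma> t)"
| "subst \<sigma> (Enc s t) = Enc (subst \<sigma> s) (subst \<sigma> t)"
| "subst \<sigma> (Fn f ts) = Fn f (map (subst \<sigma>) ts)"

fun subterms :: "('n, 'f, 'v) trm \<Rightarrow> ('n, 'f, 'v) trm set" where
  "subterms (Var x) = {Var x}"
| "subterms (Nm a) = {Nm a}"
| "subterms (Pub t) = insert (Pub t) (subterms t)"
| "subterms (Sign s t) = insert (Sign s t) (subterms s \<union> subterms t)"
| "subterms (Blind s t) = insert (Blind s t) (subterms s \<union> subterms t)"
| "subterms (Pair s t) = insert (Pair s t) (subterms s \<union> subterms t)"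
| "subterms (Enc s t) = insert (Enc s t) (subterms s \<union> subterms t)"
| "subterms (Fn f ts) = insert (Fn f ts) (\<Union>t\<in>set ts. subterms t)"

definition psubterms :: "('n, 'f, 'v) trm \<Rightarrow> ('n, 'f, 'v) trm set" where
  "psubterms t = subterms t - {t}"

fun guarded :: "('n, 'f, 'v) trm \<Rightarrow> bool" where
  "guarded (Fn f ts) = False"
| "guarded _ = True"

inductive acEq :: "'f option \<Rightarrow> ('n, 'f, 'v) trm \<Rightarrow> ('n, 'f, 'v) trm \<Rightarrow> bool"
  for ac :: "'f option" where
  ac_refl: "acEq ac t t"
| ac_sym: "acEq ac s t \<Longrightarrow> acEq ac t s"
| ac_trans: "acEq ac s t \<Longrightarrow> acEq ac t u \<Longrightarrow> acEq ac s u"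
| ac_assoc: "ac = Some p \<Longrightarrow> acEq ac (Fn p [Fn p [a, b], c]) (Fn p [a, Fn p [b, c]])"
| ac_comm: "ac = Some p \<Longrightarrow> acEq ac (Fn p [a, b]) (Fn p [b, a])"
| ac_Pub: "acEq ac s t \<Longrightarrow> acEq ac (Pub s) (Pub t)"
| ac_Sign: "acEq ac s s' \<Longrightarrow> acEq ac t t' \<Longrightarrow> acEq ac (Sign s t) (Sign s' t')"
| ac_Blind: "acEq ac s s' \<Longrightarrow> acEq ac t t' \<Longrightarrow> acEq ac (Blind s t) (Blind s' t')"
| ac_Pair: "acEq ac s s' \<Longrightarrow> acEq ac t t' \<Longrightarrow> acEq ac (Pair s t) (Pair s' t')"
| ac_Enc: "acEq ac s s' \<Longrightarrow> acEq ac t t' \<Longrightarrow> acEq ac (Enc s t) (Enc s' t')"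
| ac_Fn: "list_all2 (acEq ac) ts us \<Longrightarrow> acEq ac (Fn f ts) (Fn f us)"

inductive rstep :: "(('n, 'f, 'v) trm \<times> ('n, 'f, 'v) trm) set
    \<Rightarrow> ('n, 'f, 'v) trm \<Rightarrow> ('n, 'f, 'v) trm \<Rightarrow> bool"
  for R where
  rs_root: "(l, r) \<in> R \<Longrightarrow> rstep R (subst \<sigma> l) (subst \<sigma> r)"
| rs_Pub: "rstep R s t \<Longrightarrow> rstep R (Pub s) (Pub t)"
| rs_Sign1: "rstep R s t \<Longrightarrow> rstep R (Sign s u) (Sign t u)"
| rs_Sign2: "rstep R s t \<Longrightarrow> rstep R (Sign u s) (Sign u t)"
| rs_Blind1: "rstep R s t \<Longrightarrow> rstep R (Blind s u) (Blind t u)"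
| rs_Blind2: "rstep R s t \<Longrightarrow> rstep R (Blind u s) (Blind u t)"
| rs_Pair1: "rstep R s t \<Longrightarrow> rstep R (Pair s u) (Pair t u)"
| rs_Pair2: "rstep R s t \<Longrightarrow> rstep R (Pair u s) (Pair u t)"
| rs_Enc1: "rstep R s t \<Longrightarrow> rstep R (Enc s u) (Enc t u)"
| rs_Enc2: "rstep R s t \<Longrightarrow> rstep R (Enc u s) (Enc u t)"
| rs_Fn: "rstep R s t \<Longrightarrow> rstep R (Fn f (xs @ s # ys)) (Fn f (xs @ t # ys))"

definition rstepAC where
  "rstepAC ac R s t \<longleftrightarrow> (\<exists>s' t'. acEq ac s s' \<and> rstep R s' t' \<and> acEq ac t' t)"

definition is_nf where
  "is_nf ac R t \<longleftrightarrow> \<not> (\<exists>u. rstepAC ac R t u)"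

definition eqE where
  "eqE ac R = (\<lambda>s t. rstep R s t \<or> rstep R t s \<or> acEq ac s t)\<^sup>*\<^sup>*"

text \<open>Standing assumptions on E: at most one AC symbol (of arity 2); R_E is a
  rewrite system over Sigma_E, terminating and confluent modulo AC
  (confluence modulo AC stated as the Church-Rosser property modulo AC).\<close>
definition theory_ok ::
  "('f \<Rightarrow> nat) \<Rightarrow> 'f option \<Rightarrow> (('n, 'f, 'v) trm \<times> ('n, 'f, 'v) trm) set \<Rightarrow> bool" where
  "theory_ok ar ac R \<longleftrightarrow>
     (\<forall>p. ac = Some p \<longrightarrow> ar p = 2) \<and>
     (\<forall>(l, r)\<in>R. eterm l \<and> eterm r \<and> wf_trm ar l \<and> wf_trm ar r \<and>
                 (\<forall>x. l \<noteq> Var x) \<and> vars r \<subseteq> vars l) \<and>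
     wfP (\<lambda>t s. rstepAC ac R s t) \<and>
     (\<forall>s t. eqE ac R s t \<longrightarrow>
        (\<exists>s' t'. (rstepAC ac R)\<^sup>*\<^sup>* s s' \<and> (rstepAC ac R)\<^sup>*\<^sup>* t t' \<and> acEq ac s' t'))"

definition ok_trm where
  "ok_trm ar ac R t \<longleftrightarrow> ground t \<and> wf_trm ar t \<and> is_nf ac R t"

definition ok_seq where
  "ok_seq ar ac R \<Gamma> M \<longleftrightarrow> (\<forall>t\<in>insert M \<Gamma>. ok_trm ar ac R t)"

text \<open>Terms C[M_1,...,M_k] for an E-context C (built only from Sigma_E symbols)
  and M_i in Gamma.\<close>
inductive ectx_inst :: "('f \<Rightarrow> nat) \<Rightarrow> ('n, 'f, 'v) trm set \<Rightarrow> ('n, 'f, 'v) trm \<Rightarrow> bool"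
  for ar \<Gamma> where
  ec_hole: "t \<in> \<Gamma> \<Longrightarrow> ectx_inst ar \<Gamma> t"
| ec_fn: "length ts = ar f \<Longrightarrow> \<forall>t\<in>set ts. ectx_inst ar \<Gamma> t \<Longrightarrow> ectx_inst ar \<Gamma> (Fn f ts)"

inductive rder :: "('f \<Rightarrow> nat) \<Rightarrow> 'f option \<Rightarrow> (('n, 'f, 'v) trm \<times> ('n, 'f, 'v) trm) set
    \<Rightarrow> ('n, 'f, 'v) trm set \<Rightarrow> ('n, 'f, 'v) trm \<Rightarrow> bool"
  for ar ac R where
  r_id: "ectx_inst ar \<Gamma> C \<Longrightarrow> eqE ac R M C \<Longrightarrow> rder ar ac R \<Gamma> M"
| r_pair: "rder ar ac R \<Gamma> M \<Longrightarrow> rder ar ac R \<Gamma> N \<Longrightarrow> rder ar ac R \<Gamma> (Pair M N)"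
| r_enc: "rder ar ac R \<Gamma> M \<Longrightarrow> rder ar ac R \<Gamma> K \<Longrightarrow> rder ar ac R \<Gamma> (Enc M K)"
| r_sign: "rder ar ac R \<Gamma> M \<Longrightarrow> rder ar ac R \<Gamma> K \<Longrightarrow> rder ar ac R \<Gamma> (Sign M K)"
| r_blind: "rder ar ac R \<Gamma> M \<Longrightarrow> rder ar ac R \<Gamma> K \<Longrightarrow> rder ar ac R \<Gamma> (Blind M K)"

section \<open>System L; lder ar ac R Gamma M n: a derivation of Gamma |- M of length n\<close>

inductive lder :: "('f \<Rightarrow> nat) \<Rightarrow> 'f option \<Rightarrow> (('n, 'f, 'v) trm \<times> ('n, 'f, 'v) trm) set
    \<Rightarrow> ('n, 'f, 'v) trm set \<Rightarrow> ('n, 'f, 'v) trm \<Rightarrow> nat \<Rightarrow> bool"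
  for ar ac R where
  l_r: "ok_seq ar ac R \<Gamma> M \<Longrightarrow> rder ar ac R \<Gamma> M \<Longrightarrow> lder ar ac R \<Gamma> M 1"
| l_lp: "ok_seq ar ac R \<Gamma> T \<Longrightarrow> Pair M N \<in> \<Gamma> \<Longrightarrow>
         lder ar ac R (\<Gamma> \<union> {M, N}) T n \<Longrightarrow> lder ar ac R \<Gamma> T (Suc n)"
| l_le: "ok_seq ar ac R \<Gamma> N \<Longrightarrow> Enc M K \<in> \<Gamma> \<Longrightarrow> rder ar ac R \<Gamma> K \<Longrightarrow>
         lder ar ac R (\<Gamma> \<union> {M, K}) N n \<Longrightarrow> lder ar ac R \<Gamma> N (Suc n)"
| l_sign: "ok_seq ar ac R \<Gamma> N \<Longrightarrow> Sign M K \<in> \<Gamma> \<Longrightarrow> Pub L \<in> \<Gamma> \<Longrightarrow> acEq ac K L \<Longrightarrow>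
         lder ar ac R (\<Gamma> \<union> {M}) N n \<Longrightarrow> lder ar ac R \<Gamma> N (Suc n)"
| l_blind1: "ok_seq ar ac R \<Gamma> N \<Longrightarrow> Blind M K \<in> \<Gamma> \<Longrightarrow> rder ar ac R \<Gamma> K \<Longrightarrow>
         lder ar ac R (\<Gamma> \<union> {M, K}) N n \<Longrightarrow> lder ar ac R \<Gamma> N (Suc n)"
| l_blind2: "ok_seq ar ac R \<Gamma> N \<Longrightarrow> Sign (Blind M Rb) K \<in> \<Gamma> \<Longrightarrow> rder ar ac R \<Gamma> Rb \<Longrightarrow>
         lder ar ac R (\<Gamma> \<union> {Sign M K, Rb}) N n \<Longrightarrow> lder ar ac R \<Gamma> N (Suc n)"
| l_ls: "ok_seq ar ac R \<Gamma> M \<Longrightarrow> guarded A \<Longrightarrow> A \<in> (\<Union>t\<in>insert M \<Gamma>. subterms t) \<Longrightarrow>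
         rder ar ac R \<Gamma> A \<Longrightarrow> lder ar ac R (insert A \<Gamma>) M n \<Longrightarrow> lder ar ac R \<Gamma> M (Suc n)"

definition pst :: "('n, 'f, 'v) trm set \<Rightarrow> ('n, 'f, 'v) trm set" where
  "pst \<Delta> = (\<Union>t\<in>\<Delta>. psubterms t)"

definition sst :: "('n, 'f, 'v) trm set \<Rightarrow> ('n, 'f, 'v) trm set" where
  "sst \<Delta> = {Sign M N | M N. M \<in> pst \<Delta> \<and> N \<in> pst \<Delta>}"

definition St :: "('n, 'f, 'v) trm set \<Rightarrow> ('n, 'f, 'v) trm set" where
  "St \<Delta> = \<Delta> \<union> pst \<Delta> \<union> sst \<Delta>"

end

theory Submission
  imports Defs
begin
lemma subterms_refl[simp]: "t \<in> subterms t"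
  by (cases t) auto

lemma size_Fn_arg: "x \<in> set ts \<Longrightarrow> size x < size (Fn f ts)"
  by (induction ts) auto

lemma subterms_size: "s \<in> subterms t \<Longrightarrow> size s \<le> size t"
proof (induction t)
  case (Fn f ts)
  then show ?case using size_Fn_arg[of _ ts f] by (fastforce)
qed auto

lemma subterms_trans: "u \<in> subterms s \<Longrightarrow> s \<in> subterms t \<Longrightarrow> u \<in> subterms t"
  by (induction t) auto

lemma psub_size: "s \<in> psubterms t \<Longrightarrow> size s < size t"
proof (induction t)
  case (Fn f ts)
  then show ?case using size_Fn_arg[of _ ts f] subterms_size
    by (fastforce simp: psubterms_def)
qed (auto simp: psubterms_def dest: subterms_size)

lemma finite_subterms: "finite (subterms t)"
  by (induction t) auto


lemma psubI: "u \<in> subterms t \<Longrightarrow> size u < size t \<Longrightarrow> u \<in> psubterms t"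
  by (auto simp: psubterms_def)

lemma psub_of_sub: "u \<in> subterms a \<Longrightarrow> a \<in> psubterms d \<Longrightarrow> u \<in> psubterms d"
proof (rule psubI)
  assume u: "u \<in> subterms a" and a: "a \<in> psubterms d"
  show "u \<in> subterms d" using u a subterms_trans by (auto simp: psubterms_def)
  show "size u < size d" using subterms_size[OF u] psub_size[OF a] by simp
qed

lemma St_closed_sub:
  assumes "t \<in> St \<Delta>" "u \<in> psubterms t" shows "u \<in> pst \<Delta>"
  using assms
proof (unfold St_def, elim UnE)
  assume "t \<in> \<Delta>" then show ?thesis using assms(2) by (auto simp: pst_def)
next
  assume "t \<in> pst \<Delta>"
  then obtain d where d: "d \<in> \<Delta>" "t \<in> psubterms d" by (auto simp: pst_def)
  have "u \<in> psubterms d" using psub_of_sub[OF _ d(2), of u] assms(2) by (auto simp: psubterms_def)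
  then show ?thesis using d(1) by (auto simp: pst_def)
next
  assume "t \<in> sst \<Delta>"
  then obtain a b where ab: "t = Sign a b" "a \<in> pst \<Delta>" "b \<in> pst \<Delta>" by (auto simp: sst_def)
  then have "u \<in> subterms a \<or> u \<in> subterms b" using assms(2) by (auto simp: psubterms_def)
  then show ?thesis
  proof
    assume u: "u \<in> subterms a"
    obtain d where d: "d \<in> \<Delta>" "a \<in> psubterms d" using ab(2) by (auto simp: pst_def)
    show ?thesis using psub_of_sub[OF u d(2)] d(1) by (auto simp: pst_def)
  next
    assume u: "u \<in> subterms b"
    obtain d where d: "d \<in> \<Delta>" "b \<in> psubterms d" using ab(3) by (auto simp: pst_def)
    show ?thesis using psub_of_sub[OF u d(2)] d(1) by (auto simp: pst_def)
  qed
qed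

lemma lder_ok: "lder ar ac R \<Gamma> M n \<Longrightarrow> ok_seq ar ac R \<Gamma> M"
  by (induction rule: lder.induct) auto

lemma rder_mem: "M \<in> \<Gamma> \<Longrightarrow> rder ar ac R \<Gamma> M"
  by (rule r_id[where C=M]) (auto intro: ec_hole simp: eqE_def)

lemma lder_mem: "ok_seq ar ac R \<Gamma> M \<Longrightarrow> M \<in> \<Gamma> \<Longrightarrow> lder ar ac R \<Gamma> M 1"
  by (rule l_r) (auto intro: rder_mem)

lemma stepA:
  assumes "finite S" "\<Gamma> \<subseteq> S" "X \<subseteq> S" "lder ar ac R (\<Gamma> \<union> X) M m"
    "m \<le> card (S - (\<Gamma> \<union> X)) + 1"
    "\<And>k. lder ar ac R (\<Gamma> \<union> X) M k \<Longrightarrow> lder ar ac R \<Gamma> M (Suc k)"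
  shows "\<exists>m. lder ar ac R \<Gamma> M m \<and> m \<le> card (S - \<Gamma>) + 1"
proof (cases "X \<subseteq> \<Gamma>")
  case True
  then have "\<Gamma> \<union> X = \<Gamma>" by auto
  then show ?thesis using assms(4,5) by auto
next
  case False
  then have "S - (\<Gamma> \<union> X) \<subset> S - \<Gamma>" using assms(3) by auto
  then have "card (S - (\<Gamma> \<union> X)) < card (S - \<Gamma>)"
    using assms(1) by (meson finite_Diff psubset_card_mono)
  then show ?thesis using assms(4,5,6) by (intro exI[of _ "Suc m"]) auto
qed

lemma stepB:
  assumes "finite S" "\<Gamma> \<subseteq> S" "X \<subseteq> S" "M \<in> S" "M \<notin> \<Gamma>"
    "ok_seq ar ac R \<Gamma> M"
    "lder ar ac R (\<Gamma> \<union> X) M n"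
    "M \<notin> \<Gamma> \<union> X \<Longrightarrow> \<exists>m. lder ar ac R (\<Gamma> \<union> X) M m \<and> m \<le> card (S - (\<Gamma> \<union> X))"
    "\<And>k. lder ar ac R (\<Gamma> \<union> X) M k \<Longrightarrow> lder ar ac R \<Gamma> M (Suc k)"
    "X - \<Gamma> = {M} \<Longrightarrow> rder ar ac R \<Gamma> M \<or> (\<exists>x\<in>S - \<Gamma>. x \<noteq> M)"
  shows "\<exists>m. lder ar ac R \<Gamma> M m \<and> m \<le> card (S - \<Gamma>)"
proof -
  have c1: "1 \<le> card (S - \<Gamma>)"
    using assms(1,4,5) by (metis DiffI One_nat_def Suc_leI card_gt_0_iff empty_iff finite_Diff)
  show ?thesis
  proof (cases "X \<subseteq> \<Gamma>")
    case True
    then have "\<Gamma> \<union> X = \<Gamma>" by auto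
    then show ?thesis using assms(5,8) by auto
  next
    case False
    show ?thesis
    proof (cases "M \<in> \<Gamma> \<union> X")
      case False2: False
      then obtain m where m: "lder ar ac R (\<Gamma> \<union> X) M m" "m \<le> card (S - (\<Gamma> \<union> X))"
        using assms(8) by blast
      have "S - (\<Gamma> \<union> X) \<subset> S - \<Gamma>" using assms(3) False by auto
      then have "card (S - (\<Gamma> \<union> X)) < card (S - \<Gamma>)"
        using assms(1) by (meson finite_Diff psubset_card_mono)
      then show ?thesis using m assms(9) by (intro exI[of _ "Suc m"]) auto
    next
      case True
      have l1: "lder ar ac R (\<Gamma> \<union> X) M 1"
        using lder_mem[OF lder_ok[OF assms(7)] True] .
      show ?thesis
      proof (cases "\<exists>x\<in>S - \<Gamma>. x \<noteq> M")
        case True2: True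
        then obtain x where x: "x \<in> S - \<Gamma>" "x \<noteq> M" by blast
        have "{M, x} \<subseteq> S - \<Gamma>" using x assms(4,5) by auto
        then have "card {M, x} \<le> card (S - \<Gamma>)" using assms(1) by (meson card_mono finite_Diff)
        then have "2 \<le> card (S - \<Gamma>)" using x(2) by auto
        then show ?thesis using assms(9)[OF l1] by (intro exI[of _ "Suc 1"]) auto
      next
        case False3: False
        have "X - \<Gamma> = {M}" using False3 True assms(3,5) by auto
        then have "rder ar ac R \<Gamma> M" using assms(10) False3 by blast
        then show ?thesis using c1 l_r[OF assms(6)] by auto
      qed
    qed
  qed
qed


lemma sub_closed: "\<forall>t\<in>S. subterms t \<subseteq> S \<Longrightarrow> t \<in> S \<Longrightarrow> u \<in> subterms t \<Longrightarrow> u \<in> S"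
  by blast

lemma boundA:
  assumes "lder ar ac R \<Gamma> M n" "finite S" "\<Gamma> \<subseteq> S" "M \<in> S"
    and cl: "\<forall>t\<in>S. subterms t \<subseteq> S"
    and cb: "\<forall>a r K. Sign (Blind a r) K \<in> S \<longrightarrow> Sign a K \<in> S"
  shows "\<exists>m. lder ar ac R \<Gamma> M m \<and> m \<le> card (S - \<Gamma>) + 1"
  using assms(1,3,4)
proof (induction rule: lder.induct)
  case (l_r \<Gamma> M)
  then show ?case using lder.l_r[of ar ac R \<Gamma> M] by (intro exI[of _ 1]) simp
next
  case (l_lp \<Gamma> T a b n)
  have P: "trm.Pair a b \<in> S" using l_lp by blast
  have X: "{a, b} \<subseteq> S" using cl[rule_format, OF P] by auto
  obtain m where "lder ar ac R (\<Gamma> \<union> {a,b}) T m" "m \<le> card (S - (\<Gamma> \<union> {a,b})) + 1"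
    using l_lp X by auto
  then show ?case using stepA[OF assms(2) l_lp.prems(1) X] lder.l_lp[OF l_lp.hyps(1,2)] by blast
next
  case (l_le \<Gamma> N a K n)
  have P: "Enc a K \<in> S" using l_le by blast
  have X: "{a, K} \<subseteq> S" using cl[rule_format, OF P] by auto
  obtain m where "lder ar ac R (\<Gamma> \<union> {a,K}) N m" "m \<le> card (S - (\<Gamma> \<union> {a,K})) + 1"
    using l_le X by auto
  then show ?case using stepA[OF assms(2) l_le.prems(1) X] lder.l_le[OF l_le.hyps(1,2,3)] by blast
next
  case (l_sign \<Gamma> N a K L n)
  have P: "Sign a K \<in> S" using l_sign by blast
  have X: "{a} \<subseteq> S" using cl[rule_format, OF P] by auto
  obtain m where "lder ar ac R (\<Gamma> \<union> {a}) N m" "m \<le> card (S - (\<Gamma> \<union> {a})) + 1"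
    using l_sign X by auto
  then show ?case using stepA[OF assms(2) l_sign.prems(1) X] lder.l_sign[OF l_sign.hyps(1,2,3,4)] by blast
next
  case (l_blind1 \<Gamma> N a K n)
  have P: "Blind a K \<in> S" using l_blind1 by blast
  have X: "{a, K} \<subseteq> S" using cl[rule_format, OF P] by auto
  obtain m where "lder ar ac R (\<Gamma> \<union> {a,K}) N m" "m \<le> card (S - (\<Gamma> \<union> {a,K})) + 1"
    using l_blind1 X by auto
  then show ?case using stepA[OF assms(2) l_blind1.prems(1) X] lder.l_blind1[OF l_blind1.hyps(1,2,3)] by blast
next
  case (l_blind2 \<Gamma> N a Rb K n)
  have P: "Sign (Blind a Rb) K \<in> S" using l_blind2 by blast
  have X: "{Sign a K, Rb} \<subseteq> S" using cl[rule_format, OF P] cb[rule_format, OF P] by auto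
  obtain m where "lder ar ac R (\<Gamma> \<union> {Sign a K, Rb}) N m" "m \<le> card (S - (\<Gamma> \<union> {Sign a K, Rb})) + 1"
    using l_blind2 X by auto
  then show ?case using stepA[OF assms(2) l_blind2.prems(1) X] lder.l_blind2[OF l_blind2.hyps(1,2,3)] by blast
next
  case (l_ls \<Gamma> M A n)
  have X: "{A} \<subseteq> S" using l_ls cl by auto
  obtain m where "lder ar ac R (\<Gamma> \<union> {A}) M m" "m \<le> card (S - (\<Gamma> \<union> {A})) + 1"
    using l_ls X by auto
  then show ?case using stepA[OF assms(2) l_ls.prems(1) X] lder.l_ls[OF l_ls.hyps(1,2,3,4)] by simp
qed


lemma boundB:
  assumes "lder ar ac R \<Gamma> M n" "finite S" "\<Gamma> \<subseteq> S" "M \<in> S" "M \<notin> \<Gamma>"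
    "\<forall>t\<in>S. M \<notin> psubterms t"
    and cl: "\<forall>t\<in>S. subterms t \<subseteq> S"
    and cb: "\<forall>a r K. Sign (Blind a r) K \<in> S \<longrightarrow> Sign a K \<in> S"
  shows "\<exists>m. lder ar ac R \<Gamma> M m \<and> m \<le> card (S - \<Gamma>)"
  using assms(1,3,4,5,6)
proof (induction rule: lder.induct)
  case (l_r \<Gamma> M)
  have "1 \<le> card (S - \<Gamma>)"
    using assms(2) l_r by (metis DiffI One_nat_def Suc_leI card_gt_0_iff empty_iff finite_Diff)
  then show ?case using lder.l_r[OF l_r(1,2)] by auto
next
  case (l_lp \<Gamma> T a b n)
  have P: "trm.Pair a b \<in> S" using l_lp by blast
  have X: "{a, b} \<subseteq> S" using cl[rule_format, OF P] by auto
  show ?case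
  proof (rule stepB[OF assms(2) l_lp.prems(1) X l_lp.prems(2,3) l_lp.hyps(1,3)])
    show "T \<notin> \<Gamma> \<union> {a, b} \<Longrightarrow> \<exists>m. lder ar ac R (\<Gamma> \<union> {a, b}) T m \<and> m \<le> card (S - (\<Gamma> \<union> {a, b}))"
      using l_lp X by auto
    show "\<And>k. lder ar ac R (\<Gamma> \<union> {a, b}) T k \<Longrightarrow> lder ar ac R \<Gamma> T (Suc k)"
      using lder.l_lp[OF l_lp.hyps(1,2)] by blast
    assume "{a, b} - \<Gamma> = {T}"
    then have "T \<in> psubterms (trm.Pair a b)" by (auto intro!: psubI)
    then show "rder ar ac R \<Gamma> T \<or> (\<exists>x\<in>S - \<Gamma>. x \<noteq> T)" using l_lp.prems(4) P by blast
  qed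
next
  case (l_le \<Gamma> N a K n)
  have P: "Enc a K \<in> S" using l_le by blast
  have X: "{a, K} \<subseteq> S" using cl[rule_format, OF P] by auto
  show ?case
  proof (rule stepB[OF assms(2) l_le.prems(1) X l_le.prems(2,3) l_le.hyps(1,4)])
    show "N \<notin> \<Gamma> \<union> {a, K} \<Longrightarrow> \<exists>m. lder ar ac R (\<Gamma> \<union> {a, K}) N m \<and> m \<le> card (S - (\<Gamma> \<union> {a, K}))"
      using l_le X by auto
    show "\<And>k. lder ar ac R (\<Gamma> \<union> {a, K}) N k \<Longrightarrow> lder ar ac R \<Gamma> N (Suc k)"
      using lder.l_le[OF l_le.hyps(1,2,3)] by blast
    assume "{a, K} - \<Gamma> = {N}"
    then have "N \<in> psubterms (Enc a K)" by (auto intro!: psubI)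
    then show "rder ar ac R \<Gamma> N \<or> (\<exists>x\<in>S - \<Gamma>. x \<noteq> N)" using l_le.prems(4) P by blast
  qed
next
  case (l_sign \<Gamma> N a K L n)
  have P: "Sign a K \<in> S" using l_sign by blast
  have X: "{a} \<subseteq> S" using cl[rule_format, OF P] by auto
  show ?case
  proof (rule stepB[OF assms(2) l_sign.prems(1) X l_sign.prems(2,3) l_sign.hyps(1,5)])
    show "N \<notin> \<Gamma> \<union> {a} \<Longrightarrow> \<exists>m. lder ar ac R (\<Gamma> \<union> {a}) N m \<and> m \<le> card (S - (\<Gamma> \<union> {a}))"
      using l_sign X by auto
    show "\<And>k. lder ar ac R (\<Gamma> \<union> {a}) N k \<Longrightarrow> lder ar ac R \<Gamma> N (Suc k)"
      using lder.l_sign[OF l_sign.hyps(1,2,3,4)] by blast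
    assume "{a} - \<Gamma> = {N}"
    then have "N \<in> psubterms (Sign a K)" by (auto intro!: psubI)
    then show "rder ar ac R \<Gamma> N \<or> (\<exists>x\<in>S - \<Gamma>. x \<noteq> N)" using l_sign.prems(4) P by blast
  qed
next
  case (l_blind1 \<Gamma> N a K n)
  have P: "Blind a K \<in> S" using l_blind1 by blast
  have X: "{a, K} \<subseteq> S" using cl[rule_format, OF P] by auto
  show ?case
  proof (rule stepB[OF assms(2) l_blind1.prems(1) X l_blind1.prems(2,3) l_blind1.hyps(1,4)])
    show "N \<notin> \<Gamma> \<union> {a, K} \<Longrightarrow> \<exists>m. lder ar ac R (\<Gamma> \<union> {a, K}) N m \<and> m \<le> card (S - (\<Gamma> \<union> {a, K}))"
      using l_blind1 X by auto
    show "\<And>k. lder ar ac R (\<Gamma> \<union> {a, K}) N k \<Longrightarrow> lder ar ac R \<Gamma> N (Suc k)"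
      using lder.l_blind1[OF l_blind1.hyps(1,2,3)] by blast
    assume "{a, K} - \<Gamma> = {N}"
    then have "N \<in> psubterms (Blind a K)" by (auto intro!: psubI)
    then show "rder ar ac R \<Gamma> N \<or> (\<exists>x\<in>S - \<Gamma>. x \<noteq> N)" using l_blind1.prems(4) P by blast
  qed
next
  case (l_blind2 \<Gamma> N a Rb K n)
  have P: "Sign (Blind a Rb) K \<in> S" using l_blind2 by blast
  have X: "{Sign a K, Rb} \<subseteq> S" using cl[rule_format, OF P] cb[rule_format, OF P] by auto
  show ?case
  proof (rule stepB[OF assms(2) l_blind2.prems(1) X l_blind2.prems(2,3) l_blind2.hyps(1,4)])
    show "N \<notin> \<Gamma> \<union> {Sign a K, Rb} \<Longrightarrow> \<exists>m. lder ar ac R (\<Gamma> \<union> {Sign a K, Rb}) N m \<and> m \<le> card (S - (\<Gamma> \<union> {Sign a K, Rb}))"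
      using l_blind2 X by auto
    show "\<And>k. lder ar ac R (\<Gamma> \<union> {Sign a K, Rb}) N k \<Longrightarrow> lder ar ac R \<Gamma> N (Suc k)"
      using lder.l_blind2[OF l_blind2.hyps(1,2,3)] by blast
    assume A: "{Sign a K, Rb} - \<Gamma> = {N}"
    have pa: "a \<in> psubterms (Sign (Blind a Rb) K)" by (auto intro!: psubI)
    have pK: "K \<in> psubterms (Sign (Blind a Rb) K)" by (auto intro!: psubI)
    have pR: "Rb \<in> psubterms (Sign (Blind a Rb) K)" by (auto intro!: psubI)
    have Q: "N \<notin> psubterms (Sign (Blind a Rb) K)" using l_blind2.prems(4) P by blast
    have NS: "N = Sign a K" using A pR Q by auto
    have aS: "a \<in> S" "K \<in> S" using cl[rule_format, OF P] pa pK by (auto simp: psubterms_def)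
    have ne: "a \<noteq> N" "K \<noteq> N" using pa pK Q by auto
    show "rder ar ac R \<Gamma> N \<or> (\<exists>x\<in>S - \<Gamma>. x \<noteq> N)"
    proof (cases "a \<in> \<Gamma> \<and> K \<in> \<Gamma>")
      case True
      then have "rder ar ac R \<Gamma> N" unfolding NS by (auto intro: r_sign rder_mem)
      then show ?thesis ..
    next
      case False
      then show ?thesis using aS ne by blast
    qed
  qed
next
  case (l_ls \<Gamma> M A n)
  have X: "{A} \<subseteq> S" using l_ls cl by auto
  show ?case
  proof (rule stepB[OF assms(2) l_ls.prems(1) X l_ls.prems(2,3) l_ls.hyps(1)])
    show "lder ar ac R (\<Gamma> \<union> {A}) M n" using l_ls.hyps(5) by simp
    show "M \<notin> \<Gamma> \<union> {A} \<Longrightarrow> \<exists>m. lder ar ac R (\<Gamma> \<union> {A}) M m \<and> m \<le> card (S - (\<Gamma> \<union> {A}))"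
      using l_ls X by auto
    show "\<And>k. lder ar ac R (\<Gamma> \<union> {A}) M k \<Longrightarrow> lder ar ac R \<Gamma> M (Suc k)"
      using lder.l_ls[OF l_ls.hyps(1,2,3,4)] by simp
    assume "{A} - \<Gamma> = {M}"
    then show "rder ar ac R \<Gamma> M \<or> (\<exists>x\<in>S - \<Gamma>. x \<noteq> M)" using l_ls.hyps(4) by auto
  qed
qed


lemma finite_St: "finite \<Delta> \<Longrightarrow> finite (St \<Delta>)"
proof -
  assume f: "finite \<Delta>"
  have fp: "finite (pst \<Delta>)" using f finite_subterms
    by (auto simp: pst_def psubterms_def)
  have "sst \<Delta> = (\<lambda>(a, b). Sign a b) ` (pst \<Delta> \<times> pst \<Delta>)" by (auto simp: sst_def)
  then have "finite (sst \<Delta>)" using fp by simp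
  then show ?thesis using f fp by (simp add: St_def)
qed

theorem lemma6:
  fixes ar :: "'f \<Rightarrow> nat" and ac :: "'f option"
    and R :: "(('n, 'f, 'v) trm \<times> ('n, 'f, 'v) trm) set"
    and \<Gamma> :: "('n, 'f, 'v) trm set" and M :: "('n, 'f, 'v) trm"
  assumes "theory_ok ar ac R"
    and "finite \<Gamma>"
    and "lder ar ac R \<Gamma> M n"
  shows "\<exists>m. lder ar ac R \<Gamma> M m \<and> m \<le> card (St (insert M \<Gamma>))"
proof -
  define S where "S = St (insert M \<Gamma>)"
  have fS: "finite S" using assms(2) unfolding S_def by (intro finite_St) simp
  have GS: "\<Gamma> \<subseteq> S" "M \<in> S" unfolding S_def St_def by auto
  have pS: "\<And>t u. t \<in> S \<Longrightarrow> u \<in> psubterms t \<Longrightarrow> u \<in> S"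
    using St_closed_sub unfolding S_def St_def by blast
  have cl: "\<forall>t\<in>S. subterms t \<subseteq> S"
  proof (intro ballI subsetI)
    fix t u assume "t \<in> S" "u \<in> subterms t"
    then show "u \<in> S" using pS[of t u] by (cases "u = t") (auto simp: psubterms_def)
  qed
  have cb: "\<forall>a r K. Sign (Blind a r) K \<in> S \<longrightarrow> Sign a K \<in> S"
  proof (intro allI impI)
    fix a r K assume P: "Sign (Blind a r) K \<in> S"
    have "Blind a r \<in> pst (insert M \<Gamma>)" "K \<in> pst (insert M \<Gamma>)"
      by (rule St_closed_sub[OF P[unfolded S_def]], auto intro!: psubI)+
    moreover have "a \<in> pst (insert M \<Gamma>)"
    proof -
      have "a \<in> psubterms (Blind a r)" by (auto intro!: psubI)
      then show ?thesis using St_closed_sub[of "Blind a r" "insert M \<Gamma>" a] calculation(1)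
        by (auto simp: St_def)
    qed
    ultimately show "Sign a K \<in> S" unfolding S_def St_def sst_def by blast
  qed
  show ?thesis
  proof (cases "\<Gamma> = {}")
    case True
    have Q: "\<forall>t\<in>S. M \<notin> psubterms t"
    proof
      fix t assume "t \<in> S"
      show "M \<notin> psubterms t"
      proof
        assume "M \<in> psubterms t"
        then have "M \<in> pst {M}" using St_closed_sub[of t "{M}" M] \<open>t \<in> S\<close> True
          unfolding S_def by simp
        then have "M \<in> psubterms M" by (simp add: pst_def)
        then show False using psub_size by blast
      qed
    qed
    obtain m where "lder ar ac R \<Gamma> M m" "m \<le> card (S - \<Gamma>)"
      using boundB[OF assms(3) fS GS(1,2) _ Q cl cb] True by auto
    then show ?thesis using True unfolding S_def by auto
  next
    case False
    obtain m where m: "lder ar ac R \<Gamma> M m" "m \<le> card (S - \<Gamma>) + 1"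
      using boundA[OF assms(3) fS GS(1,2) cl cb] by auto
    have "card (S - \<Gamma>) = card S - card \<Gamma>" using GS(1) assms(2) by (simp add: card_Diff_subset)
    moreover have "1 \<le> card \<Gamma>" using False assms(2) by (simp add: Suc_le_eq card_gt_0_iff)
    moreover have "card \<Gamma> \<le> card S" using GS(1) fS by (simp add: card_mono)
    ultimately show ?thesis using m unfolding S_def by (intro exI[of _ m]) auto
  qed
qed
end
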